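(* Fix $\delta>0$ and let $\Omega=\{(x,y)\in\mathbb{R}^2 : x>-1\}$. Set $\alpha(x,y)=\frac{y^2+\delta^2}{(1+x)^2}$, $\beta(x,y)=\frac{-2y}{1+x}$, and $\lambda=a+ib$ with $a(x,y)=\frac{y}{1+x}$, $b(x,y)=\frac{\delta}{1+x}$ (so $\alpha=a^2+b^2$, $\beta=-2a$). Let $(u,v)\in C^1(\Omega,\mathbb{R}^2)$ be a solution of the real first-order system $$u_x-\alpha\,v_y=0,\qquad v_x+u_y-\beta\,v_y=0.$$ Define the complex-valued function $w:=u+v\lambda=(u+av)+i\,bv$. Then $w$ satisfies the transport equation $$w_x+\lambda\,w_y=0.$$ Conversely, if $w=p+iq$ satisfies $w_x+\lambda\,w_y=0$, then $u=p-(a/b)\,q$ and $v=q/b$ satisfy the system $u_x-\alpha v_y=0$, $v_x+u_y-\beta v_y=0$.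
   Context: The spectral parameter $\lambda=\frac{y+i\delta}{1+x}$ is the root $\lambda=\frac{-\beta+i\sqrt{4\alpha-\beta^2}}{2}$ associated with the principal symbol of the system; it satisfies the conservative Burgers equation $\lambda_x+\lambda\lambda_y=0$ on $\Omega$ (this is used in the proof). The system is elliptic on all of $\Omega$ since $4\alpha-\beta^2=4\delta^2/(1+x)^2>0$. *)

theory Defs
  imports "HOL-Analysis.Analysis"
begin

definition Omega :: "(real \<times> real) set" where
  "Omega = {(x, y). x > -1}"

definition alpha :: "real \<Rightarrow> real \<times> real \<Rightarrow> real" where
  "alpha \<delta> z = ((snd z)^2 + \<delta>^2) / (1 + fst z)^2"

definition beta :: "real \<Rightarrow> real \<times> real \<Rightarrow> real" where
  "beta \<delta> z = - 2 * snd z / (1 + fst z)"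

definition acoef :: "real \<times> real \<Rightarrow> real" where
  "acoef z = snd z / (1 + fst z)"

definition bcoef :: "real \<Rightarrow> real \<times> real \<Rightarrow> real" where
  "bcoef \<delta> z = \<delta> / (1 + fst z)"

definition lam :: "real \<Rightarrow> real \<times> real \<Rightarrow> complex" where
  "lam \<delta> z = Complex (acoef z) (bcoef \<delta> z)"

definition px :: "(real \<times> real \<Rightarrow> 'a::real_normed_vector) \<Rightarrow> real \<times> real \<Rightarrow> 'a" where
  "px f z = frechet_derivative f (at z) (1, 0)"

definition py :: "(real \<times> real \<Rightarrow> 'a::real_normed_vector) \<Rightarrow> real \<times> real \<Rightarrow> 'a" where
  "py f z = frechet_derivative f (at z) (0, 1)"

definition C1_on :: "(real \<times> real) set \<Rightarrow> (real \<times> real \<Rightarrow> 'a::real_normed_vector) \<Rightarrow> bool" where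
  "C1_on S f \<longleftrightarrow> (\<forall>z\<in>S. f differentiable (at z)) \<and>
     continuous_on S (px f) \<and> continuous_on S (py f)"

end

theory Submission
  imports Defs
begin

lemma lam_alt: "lam d = (\<lambda>z. (of_real (snd z) + \<i> * of_real d) / (1 + of_real (fst z)))"
proof
  fix z :: "real \<times> real"
  have e: "1 + complex_of_real (fst z) = complex_of_real (1 + fst z)" by simp
  show "lam d z = (of_real (snd z) + \<i> * of_real d) / (1 + of_real (fst z))"
    unfolding e by (simp add: lam_def acoef_def bcoef_def complex_eq_iff)
qed

definition Lx :: "real \<Rightarrow> real \<times> real \<Rightarrow> complex" where
  "Lx d z = - lam d z / of_real (1 + fst z)"
definition Ly :: "real \<Rightarrow> real \<times> real \<Rightarrow> complex" where
  "Ly d z = 1 / of_real (1 + fst z)"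

lemma lam_deriv:
  assumes "fst z > -1"
  shows "(lam d has_derivative (\<lambda>h. of_real (fst h) * Lx d z + of_real (snd h) * Ly d z)) (at z)"
proof -
  have nz: "1 + complex_of_real (fst z) \<noteq> 0"
    using assms by (metis add.commute add_eq_0_iff of_real_1 of_real_add of_real_eq_0_iff less_irrefl) 
  show ?thesis unfolding lam_alt
    apply (rule derivative_eq_intros refl | rule nz)+
    unfolding Lx_def Ly_def lam_alt
    apply (rule ext) using nz apply (simp add: field_simps) apply (simp only: add_divide_distrib[symmetric]) apply simp
    done
qed

lemma px_eq: "(f has_derivative D) (at z) \<Longrightarrow> px f z = D (1,0)"
  unfolding px_def using frechet_derivative_at by metis
lemma py_eq: "(f has_derivative D) (at z) \<Longrightarrow> py f z = D (0,1)"
  unfolding py_def using frechet_derivative_at by metis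

lemma w_deriv:
  fixes u v :: "real \<times> real \<Rightarrow> real"
  assumes "u differentiable (at z)" "v differentiable (at z)" "fst z > -1"
  shows "px (\<lambda>z. complex_of_real (u z) + complex_of_real (v z) * lam d z) z
           = of_real (px u z) + of_real (px v z) * lam d z + of_real (v z) * Lx d z"
    "py (\<lambda>z. complex_of_real (u z) + complex_of_real (v z) * lam d z) z
           = of_real (py u z) + of_real (py v z) * lam d z + of_real (v z) * Ly d z"
proof -
  have du: "(u has_derivative frechet_derivative u (at z)) (at z)"
    using assms(1) frechet_derivative_works by blast
  have dv: "(v has_derivative frechet_derivative v (at z)) (at z)"
    using assms(2) frechet_derivative_works by blast
  have D: "((\<lambda>z. complex_of_real (u z) + complex_of_real (v z) * lam d z) has_derivative
     (\<lambda>h. of_real (frechet_derivative u (at z) h) +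
        (of_real (v z) * (of_real (fst h) * Lx d z + of_real (snd h) * Ly d z)
         + of_real (frechet_derivative v (at z) h) * lam d z))) (at z)"
    by (intro has_derivative_add has_derivative_mult has_derivative_of_real du dv lam_deriv assms(3))
  show "px (\<lambda>z. complex_of_real (u z) + complex_of_real (v z) * lam d z) z
           = of_real (px u z) + of_real (px v z) * lam d z + of_real (v z) * Lx d z"
    using px_eq[OF D] by (simp add: px_def)
  show "py (\<lambda>z. complex_of_real (u z) + complex_of_real (v z) * lam d z) z
           = of_real (py u z) + of_real (py v z) * lam d z + of_real (v z) * Ly d z"
    using py_eq[OF D] by (simp add: py_def)
qed

lemma burgers: "fst z > -1 \<Longrightarrow> Lx d z + lam d z * Ly d z = 0"
  unfolding Lx_def Ly_def by (simp add: field_simps)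

lemma charroot: assumes "fst z > -1" shows "of_real (alpha d z) + of_real (beta d z) * lam d z + (lam d z)^2 = 0"
proof -
  define c where "c = 1 + fst z"
  define y where "y = snd z"
  have c: "c \<noteq> 0" using assms c_def by simp
  have e: "alpha d z = (y^2 + d^2)/c^2" "beta d z = -2*y/c" "lam d z = Complex (y/c) (d/c)"
    by (simp_all add: alpha_def beta_def lam_def acoef_def bcoef_def c_def y_def)
  show ?thesis unfolding e using c
    by (simp add: complex_eq_iff power2_eq_square field_simps)
qed

lemma ident:
  fixes ux uy vx vy vv al be :: real and L A B C :: complex
  assumes "of_real al + of_real be * L + L^2 = 0" "A + L * B = 0"
  shows "of_real ux + of_real vx * L + of_real vv * A + L * (of_real uy + of_real vy * L + of_real vv * B)
     = of_real (ux - al * vy) + L * of_real (vx + uy - be * vy)"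
proof -
  have "of_real ux + of_real vx * L + of_real vv * A + L * (of_real uy + of_real vy * L + of_real vv * B)
     = of_real (ux - al * vy) + L * of_real (vx + uy - be * vy)
       + of_real vy * (of_real al + of_real be * L + L^2) + of_real vv * (A + L * B)"
    by (simp add: algebra_simps power2_eq_square)
  then show ?thesis using assms by simp
qed

lemma Omega_open: "open Omega"
proof -
  have "Omega = fst -` {-1<..}" unfolding Omega_def by auto
  then show ?thesis by (metis open_vimage_fst open_greaterThan)
qed


lemma transfer_d:
  assumes "f differentiable (at z)" "open S" "z \<in> S" "\<And>x. x \<in> S \<Longrightarrow> f x = g x"
  shows "px g z = px f z" "py g z = py f z"
proof -
  have D: "(f has_derivative frechet_derivative f (at z)) (at z)"
    using assms(1) frechet_derivative_works by blast
  have "(g has_derivative frechet_derivative f (at z)) (at z)"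
    using has_derivative_transform_within_open[OF D assms(2,3)] assms(4) by blast
  then show "px g z = px f z" "py g z = py f z"
    using px_eq py_eq D by metis+
qed

lemma Re_diff: "w differentiable (at z) \<Longrightarrow> (\<lambda>z. Re (w z)) differentiable (at z)"
  unfolding differentiable_def using has_derivative_Re by blast
lemma Im_diff: "w differentiable (at z) \<Longrightarrow> (\<lambda>z. Im (w z)) differentiable (at z)"
  unfolding differentiable_def using has_derivative_Im by blast

lemma fst_diff: "(fst :: real \<times> real \<Rightarrow> real) differentiable (at z)"
  unfolding differentiable_def using has_derivative_fst[OF has_derivative_ident] by blast
lemma snd_diff: "(snd :: real \<times> real \<Rightarrow> real) differentiable (at z)"
  unfolding differentiable_def using has_derivative_snd[OF has_derivative_ident] by blast

lemma ab_diff: assumes "fst z > -1" "d > 0"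
  shows "(\<lambda>z. acoef z / bcoef d z) differentiable (at z)" "bcoef d differentiable (at z)"
proof -
  have nz: "1 + fst z \<noteq> 0" using assms by simp
  show "(\<lambda>z. acoef z / bcoef d z) differentiable (at z)"
    unfolding acoef_def bcoef_def using nz assms
    by (intro derivative_intros fst_diff snd_diff) auto
  show "bcoef d differentiable (at z)"
    unfolding bcoef_def[abs_def] using nz assms
    by (intro derivative_intros fst_diff snd_diff) auto
qed

theorem proposition3p2:
  fixes \<delta> :: real
  assumes "\<delta> > 0"
  shows "(\<forall>u v :: real \<times> real \<Rightarrow> real.
            C1_on Omega u \<and> C1_on Omega v \<and>
            (\<forall>z\<in>Omega. px u z - alpha \<delta> z * py v z = 0 \<and>
                        px v z + py u z - beta \<delta> z * py v z = 0)
          \<longrightarrow> (let w = (\<lambda>z. complex_of_real (u z) + complex_of_real (v z) * lam \<delta> z)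
               in \<forall>z\<in>Omega. px w z + lam \<delta> z * py w z = 0))
       \<and> (\<forall>w :: real \<times> real \<Rightarrow> complex.
            C1_on Omega w \<and> (\<forall>z\<in>Omega. px w z + lam \<delta> z * py w z = 0)
          \<longrightarrow> (let u = (\<lambda>z. Re (w z) - acoef z / bcoef \<delta> z * Im (w z));
                   v = (\<lambda>z. Im (w z) / bcoef \<delta> z)
               in \<forall>z\<in>Omega. px u z - alpha \<delta> z * py v z = 0 \<and>
                           px v z + py u z - beta \<delta> z * py v z = 0))"
proof (intro conjI allI impI)
  fix u v :: "real \<times> real \<Rightarrow> real"
  assume H: "C1_on Omega u \<and> C1_on Omega v \<and>
            (\<forall>z\<in>Omega. px u z - alpha \<delta> z * py v z = 0 \<and>
                        px v z + py u z - beta \<delta> z * py v z = 0)"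
  show "let w = (\<lambda>z. complex_of_real (u z) + complex_of_real (v z) * lam \<delta> z)
               in \<forall>z\<in>Omega. px w z + lam \<delta> z * py w z = 0"
    unfolding Let_def
  proof
    fix z assume z: "z \<in> Omega"
    then have fz: "fst z > -1" by (auto simp: Omega_def)
    have du: "u differentiable (at z)" "v differentiable (at z)"
      using H z by (auto simp: C1_on_def)
    have e1: "px u z - alpha \<delta> z * py v z = 0" "px v z + py u z - beta \<delta> z * py v z = 0"
      using H z by auto
    show "px (\<lambda>z. complex_of_real (u z) + complex_of_real (v z) * lam \<delta> z) z +
        lam \<delta> z * py (\<lambda>z. complex_of_real (u z) + complex_of_real (v z) * lam \<delta> z) z = 0"
      unfolding w_deriv[OF du fz]
      unfolding ident[OF charroot[OF fz, where d=\<delta>] burgers[OF fz, where d=\<delta>], where ux="px u z" and vx="px v z" and vv="v z" and uy="py u z" and vy="py v z"]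
      using e1 by simp
  qed
next
  fix w :: "real \<times> real \<Rightarrow> complex"
  assume H: "C1_on Omega w \<and> (\<forall>z\<in>Omega. px w z + lam \<delta> z * py w z = 0)"
  show "let u = (\<lambda>z. Re (w z) - acoef z / bcoef \<delta> z * Im (w z));
                   v = (\<lambda>z. Im (w z) / bcoef \<delta> z)
               in \<forall>z\<in>Omega. px u z - alpha \<delta> z * py v z = 0 \<and>
                           px v z + py u z - beta \<delta> z * py v z = 0"
    unfolding Let_def
  proof
    fix z assume z: "z \<in> Omega"
    define u where "u = (\<lambda>z. Re (w z) - acoef z / bcoef \<delta> z * Im (w z))"
    define v where "v = (\<lambda>z. Im (w z) / bcoef \<delta> z)"
    have fz: "fst z > -1" using z by (auto simp: Omega_def)
    have dw: "w differentiable (at z)" using H z by (auto simp: C1_on_def)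
    have bnz: "bcoef \<delta> z \<noteq> 0" "bcoef \<delta> z > 0" using fz assms by (auto simp: bcoef_def)
    have du: "u differentiable (at z)" unfolding u_def
      by (rule differentiable_diff[OF Re_diff[OF dw] differentiable_mult[OF ab_diff(1)[OF fz assms] Im_diff[OF dw]]])
    have dv: "v differentiable (at z)" unfolding v_def
      by (rule differentiable_divide[OF Im_diff[OF dw] ab_diff(2)[OF fz assms] bnz(1)])
    have dw': "(\<lambda>z. complex_of_real (u z) + complex_of_real (v z) * lam \<delta> z) differentiable (at z)"
    proof -
      have l: "lam \<delta> differentiable (at z)" using lam_deriv[OF fz, of \<delta>] unfolding differentiable_def by blast
      have a: "(\<lambda>z. complex_of_real (u z)) differentiable (at z)" "(\<lambda>z. complex_of_real (v z)) differentiable (at z)"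
        using du dv has_derivative_of_real unfolding differentiable_def by blast+
      show ?thesis by (rule differentiable_add[OF a(1) differentiable_mult[OF a(2) l]])
    qed
    have eq: "complex_of_real (u x) + complex_of_real (v x) * lam \<delta> x = w x" if "x \<in> Omega" for x
    proof -
      have "bcoef \<delta> x \<noteq> 0" using that assms by (auto simp: bcoef_def Omega_def)
      then show ?thesis unfolding u_def v_def
        by (simp add: complex_eq_iff lam_def field_simps)
    qed
    have T: "px w z = px (\<lambda>z. complex_of_real (u z) + complex_of_real (v z) * lam \<delta> z) z"
            "py w z = py (\<lambda>z. complex_of_real (u z) + complex_of_real (v z) * lam \<delta> z) z"
      using transfer_d[OF dw' Omega_open z eq] by auto
    have "px w z + lam \<delta> z * py w z = 0" using H z by auto
    then have E: "complex_of_real (px u z - alpha \<delta> z * py v z)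
         + lam \<delta> z * complex_of_real (px v z + py u z - beta \<delta> z * py v z) = 0"
      unfolding T w_deriv[OF du dv fz]
      unfolding ident[OF charroot[OF fz, where d=\<delta>] burgers[OF fz, where d=\<delta>], where ux="px u z" and vx="px v z" and vv="v z" and uy="py u z" and vy="py v z"]
      .
    have B: "px v z + py u z - beta \<delta> z * py v z = 0"
      using arg_cong[OF E, of Im] bnz by (simp add: lam_def)
    have A: "px u z - alpha \<delta> z * py v z = 0"
      using arg_cong[OF E, of Re] B by (simp add: lam_def)
    show "px (\<lambda>z. Re (w z) - acoef z / bcoef \<delta> z * Im (w z)) z - alpha \<delta> z * py (\<lambda>z. Im (w z) / bcoef \<delta> z) z = 0 \<and>
          px (\<lambda>z. Im (w z) / bcoef \<delta> z) z + py (\<lambda>z. Re (w z) - acoef z / bcoef \<delta> z * Im (w z)) z -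
          beta \<delta> z * py (\<lambda>z. Im (w z) / bcoef \<delta> z) z = 0"
      using A B unfolding u_def v_def by simp
  qed
qed

end
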